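(* Let $a(z,y)$ and $b(z,y)$ be polynomials in $z$ and $y$ with $a(z,0)=b(z,0)=1$, and let \[ G(z,y)=\frac{a(z,y)-b(z,y)\sqrt{1-2z^2-4yz^3}}{1+2yz}. \] Then: (a) for every $\ell\geq 1$ there are polynomials $c_\ell(z),d_\ell(z)$ such that \[ \frac{\partial^{\ell}}{\partial y^{\ell}}G(z,y)\Big\vert_{y=0}=\frac{c_{\ell}(z)-d_{\ell}(z)\sqrt{1-2z^2}}{(1-2z^2)^{\ell-1/2}}; \] (b) for every $\ell\geq 0$ there are polynomials $e_\ell(z),f_\ell(z)$ such that \[ \frac{\partial^{\ell}}{\partial y^{\ell}}\frac{1}{1-G(z,y)}\Big\vert_{y=0}=\frac{e_{\ell}(z)-f_{\ell}(z)\sqrt{1-2z^2}}{(1-2z^2)^{\ell+1/2}}. \]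
   Context: Here $\sqrt{\cdot}$ denotes the principal branch (equal to $1$ at $z=y=0$), and all functions are regarded as analytic functions near $(z,y)=(0,0)$. *)

theory Defs
  imports "HOL-Complex_Analysis.Complex_Analysis" "HOL-Computational_Algebra.Polynomial"
begin

text \<open>A bivariate polynomial p(z,y) is represented as a polynomial in y whose
coefficients are polynomials in z (type complex poly poly).\<close>
definition eval2 :: "complex poly poly \<Rightarrow> complex \<Rightarrow> complex \<Rightarrow> complex" where
  "eval2 p z y = poly (map_poly (\<lambda>q. poly q z) p) y"

definition GG :: "complex poly poly \<Rightarrow> complex poly poly \<Rightarrow> complex \<Rightarrow> complex \<Rightarrow> complex" where
  "GG a b z y = (eval2 a z y - eval2 b z y * csqrt (1 - 2*z^2 - 4*y*z^3)) / (1 + 2*y*z)"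

end

theory Submission
  imports Defs
begin

definition sq :: "complex \<Rightarrow> complex" where "sq z = csqrt (1 - 2*z^2)"
definition wp :: "complex poly" where "wp = [:1,0,-2:]"
definition rep :: "nat \<Rightarrow> complex poly \<Rightarrow> complex poly \<Rightarrow> complex \<Rightarrow> complex" where
  "rep n e f z = (poly e z + poly f z * sq z) / sq z ^ n"

lemma sq_sq: "sq z ^ 2 = poly wp z"
  unfolding sq_def power2_csqrt by (simp add: wp_def algebra_simps power2_eq_square)

lemma rep_step:
  assumes "sq z \<noteq> 0"
  shows "rep n e f z = rep (Suc n) (f * wp) e z"
proof -
  have "rep (Suc n) (f * wp) e z = (poly f z * sq z ^ 2 + poly e z * sq z) / (sq z ^ n * sq z)"
    by (simp add: rep_def sq_sq mult_ac)
  also have "\<dots> = rep n e f z" using assms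
    by (simp add: rep_def power2_eq_square field_simps)
  finally show ?thesis by simp
qed

lemma rep_mono:
  assumes "n \<le> m"
  shows "\<exists>e' f'. \<forall>z. sq z \<noteq> 0 \<longrightarrow> rep n e f z = rep m e' f' z"
  using assms
proof (induction m)
  case 0 then show ?case by auto
next
  case (Suc m)
  show ?case
  proof (cases "n = Suc m")
    case True then show ?thesis by auto
  next
    case False
    then obtain e' f' where "\<forall>z. sq z \<noteq> 0 \<longrightarrow> rep n e f z = rep m e' f' z"
      using Suc by auto
    then show ?thesis using rep_step by metis
  qed
qed

lemma rep_mult:
  assumes "sq z \<noteq> 0"
  shows "rep n1 e1 f1 z * rep n2 e2 f2 z = rep (n1+n2) (e1*e2 + f1*f2*wp) (e1*f2+e2*f1) z"
proof -
  have "rep (n1+n2) (e1*e2 + f1*f2*wp) (e1*f2+e2*f1) z =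
     (poly e1 z * poly e2 z + poly f1 z * poly f2 z * sq z ^ 2 + (poly e1 z * poly f2 z + poly e2 z * poly f1 z) * sq z) / (sq z ^ n1 * sq z ^ n2)"
    by (simp add: rep_def sq_sq power_add)
  also have "\<dots> = rep n1 e1 f1 z * rep n2 e2 f2 z"
    by (simp add: rep_def power2_eq_square field_simps)
  finally show ?thesis by simp
qed

lemma rep_sum:
  "(\<Sum>i\<in>I. rep n (E i) (F i) z) = rep n (\<Sum>i\<in>I. E i) (\<Sum>i\<in>I. F i) z"
  unfolding rep_def poly_sum by (simp add: sum_divide_distrib sum.distrib sum_distrib_right add_divide_distrib)

lemma rep_scale:
  "c * rep n e f z = rep n (smult c e) (smult c f) z"
  by (simp add: rep_def algebra_simps)

lemma rep_add:
  "rep n e1 f1 z + rep n e2 f2 z = rep n (e1+e2) (f1+f2) z"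
  by (simp add: rep_def add_divide_distrib algebra_simps)

lemma ev_small: "\<forall>\<^sub>F z in nhds (0::complex). norm z < r" if "r > 0"
  using eventually_nhds_ball[OF that, of "0::complex"] by (simp add: dist_0_norm)

lemma ev_sq_nz: "\<forall>\<^sub>F z in nhds 0. sq z \<noteq> 0"
proof -
  have "\<forall>\<^sub>F z in nhds (0::complex). norm z < (1/2::real)" by (rule ev_small) simp
  then show ?thesis
proof (rule eventually_mono)
  fix z :: complex assume z: "norm z < 1/2"
  have "norm (2*z^2) = 2 * norm z ^ 2" by (simp add: norm_mult norm_power)
  also have "\<dots> < 1"
  proof -
    have h: "norm z ^ 2 < (1/2)^2" by (rule power_strict_mono) (use z in auto)
    have "(1/2::real)^2 = 1/4" by (simp add: power_divide)
    then show ?thesis using h by linarith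
  qed
  finally have n: "norm (2*z^2) < 1" .
  have "2*z^2 \<noteq> 1"
  proof
    assume "2*z^2 = 1"
    then have "norm (2*z^2) = 1" by simp
    with n show False by simp
  qed
  then show "sq z \<noteq> 0" by (simp add: sq_def)
qed
qed

definition good :: "nat \<Rightarrow> (nat \<Rightarrow> nat) \<Rightarrow> (complex \<Rightarrow> complex \<Rightarrow> complex) \<Rightarrow> bool" where
 "good N ex F \<longleftrightarrow> (\<forall>\<^sub>F z in nhds 0. F z analytic_on {0}) \<and>
    (\<forall>j\<le>N. \<exists>e f. \<forall>\<^sub>F z in nhds 0. (deriv^^j) (F z) 0 = rep (ex j) e f z)"

lemma ev_rep_mono:
  assumes "\<forall>\<^sub>F z in nhds 0. x z = rep n e f z" "n \<le> m"
  shows "\<exists>e' f'. \<forall>\<^sub>F z in nhds 0. x z = rep m e' f' z"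
proof -
  obtain e' f' where *: "\<forall>z. sq z \<noteq> 0 \<longrightarrow> rep n e f z = rep m e' f' z"
    using rep_mono[OF assms(2)] by blast
  have "\<forall>\<^sub>F z in nhds 0. x z = rep m e' f' z"
    using eventually_conj[OF assms(1) ev_sq_nz] by (rule eventually_mono) (use * in auto)
  then show ?thesis by blast
qed

lemma good_mono:
  assumes "good N ex F" "\<And>j. j \<le> N \<Longrightarrow> ex j \<le> ex' j"
  shows "good N ex' F"
  using assms ev_rep_mono unfolding good_def by metis

lemma good_mult:
  assumes F: "good N exF F" and G: "good N exG G"
    and ex: "\<And>j i. j \<le> N \<Longrightarrow> i \<le> j \<Longrightarrow> exF i + exG (j-i) \<le> exH j"
  shows "good N exH (\<lambda>z y. F z y * G z y)"
  unfolding good_def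
proof (intro conjI allI impI)
  show "\<forall>\<^sub>F z in nhds 0. (\<lambda>y. F z y * G z y) analytic_on {0}"
    using eventually_conj[OF F[unfolded good_def, THEN conjunct1] G[unfolded good_def, THEN conjunct1]]
    by (rule eventually_mono) (auto intro: analytic_on_mult)
  fix j assume j: "j \<le> N"
  have "\<forall>i\<in>{0..j}. \<exists>q::complex poly \<times> complex poly \<times> complex poly \<times> complex poly.
     \<forall>\<^sub>F z in nhds 0. (deriv^^i) (F z) 0 = rep (exH j - exG (j-i)) (fst q) (fst (snd q)) z
        \<and> (deriv^^(j-i)) (G z) 0 = rep (exG (j-i)) (fst (snd (snd q))) (snd (snd (snd q))) z"
  proof
    fix i assume i: "i \<in> {0..j}"
    have iN: "i \<le> N" "j - i \<le> N" using i j by auto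
    obtain e1 f1 where 1: "\<forall>\<^sub>F z in nhds 0. (deriv^^i) (F z) 0 = rep (exF i) e1 f1 z"
      using F iN unfolding good_def by blast
    have le: "exF i \<le> exH j - exG (j-i)" using ex[OF j, of i] i by auto
    obtain e1' f1' where 1: "\<forall>\<^sub>F z in nhds 0. (deriv^^i) (F z) 0 = rep (exH j - exG (j-i)) e1' f1' z"
      using ev_rep_mono[OF 1 le] by blast
    obtain e2 f2 where 2: "\<forall>\<^sub>F z in nhds 0. (deriv^^(j-i)) (G z) 0 = rep (exG (j-i)) e2 f2 z"
      using G iN unfolding good_def by blast
    show "\<exists>q::complex poly \<times> complex poly \<times> complex poly \<times> complex poly.
     \<forall>\<^sub>F z in nhds 0. (deriv^^i) (F z) 0 = rep (exH j - exG (j-i)) (fst q) (fst (snd q)) z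
        \<and> (deriv^^(j-i)) (G z) 0 = rep (exG (j-i)) (fst (snd (snd q))) (snd (snd (snd q))) z"
      using eventually_conj[OF 1 2] by (intro exI[of _ "(e1',f1',e2,f2)"]) simp
  qed
  from bchoice[OF this] obtain Q where Q: "\<forall>i\<in>{0..j}. \<forall>\<^sub>F z in nhds 0. (deriv^^i) (F z) 0 = rep (exH j - exG (j-i)) (fst (Q i)) (fst (snd (Q i))) z
        \<and> (deriv^^(j-i)) (G z) 0 = rep (exG (j-i)) (fst (snd (snd (Q i)))) (snd (snd (snd (Q i)))) z"
    ..
  define E1 where "E1 i = fst (Q i)" for i
  define F1 where "F1 i = fst (snd (Q i))" for i
  define E2 where "E2 i = fst (snd (snd (Q i)))" for i
  define F2 where "F2 i = snd (snd (snd (Q i)))" for i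
  have Q': "\<forall>\<^sub>F z in nhds 0. \<forall>i\<in>{0..j}. (deriv^^i) (F z) 0 = rep (exH j - exG (j-i)) (E1 i) (F1 i) z
        \<and> (deriv^^(j-i)) (G z) 0 = rep (exG (j-i)) (E2 i) (F2 i) z"
    using Q unfolding E1_def F1_def E2_def F2_def by (intro eventually_ball_finite) auto
  define EE where "EE = (\<Sum>i\<in>{0..j}. smult (of_nat (j choose i)) (E1 i * E2 i + F1 i * F2 i * wp))"
  define FF where "FF = (\<Sum>i\<in>{0..j}. smult (of_nat (j choose i)) (E1 i * F2 i + E2 i * F1 i))"
  have "\<forall>\<^sub>F z in nhds 0. (deriv^^j) (\<lambda>y. F z y * G z y) 0 =
     rep (exH j) (\<Sum>i\<in>{0..j}. smult (of_nat (j choose i)) (E1 i * E2 i + F1 i * F2 i * wp))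
                 (\<Sum>i\<in>{0..j}. smult (of_nat (j choose i)) (E1 i * F2 i + E2 i * F1 i)) z"
    using eventually_conj[OF Q' eventually_conj[OF ev_sq_nz eventually_conj[OF F[unfolded good_def, THEN conjunct1] G[unfolded good_def, THEN conjunct1]]]]
  proof (rule eventually_mono)
    fix z assume A: "(\<forall>i\<in>{0..j}. (deriv^^i) (F z) 0 = rep (exH j - exG (j-i)) (E1 i) (F1 i) z
        \<and> (deriv^^(j-i)) (G z) 0 = rep (exG (j-i)) (E2 i) (F2 i) z) \<and> sq z \<noteq> 0 \<and>
        F z analytic_on {0} \<and> G z analytic_on {0}"
    have "(deriv^^j) (\<lambda>y. F z y * G z y) 0 =
       (\<Sum>i = 0..j. of_nat (j choose i) * (deriv ^^ i) (F z) 0 * (deriv ^^ (j-i)) (G z) 0)"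
      using A by (intro higher_deriv_mult_at) auto
    also have "\<dots> = (\<Sum>i = 0..j. rep (exH j) (smult (of_nat (j choose i)) (E1 i * E2 i + F1 i * F2 i * wp))
                 (smult (of_nat (j choose i)) (E1 i * F2 i + E2 i * F1 i)) z)"
    proof (rule sum.cong[OF refl])
      fix i assume i: "i \<in> {0..j}"
      have e: "exH j - exG (j-i) + exG (j-i) = exH j" using ex[OF j, of i] i by auto
      have d1: "(deriv^^i) (F z) 0 = rep (exH j - exG (j-i)) (E1 i) (F1 i) z"
        and d2: "(deriv^^(j-i)) (G z) 0 = rep (exG (j-i)) (E2 i) (F2 i) z" using bspec[OF A[THEN conjunct1] i] by simp_all
      have "of_nat (j choose i) * (deriv ^^ i) (F z) 0 * (deriv ^^ (j-i)) (G z) 0 =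
         of_nat (j choose i) * (rep (exH j - exG (j-i)) (E1 i) (F1 i) z * rep (exG (j-i)) (E2 i) (F2 i) z)"
        unfolding d1 d2 by (simp only: mult.assoc)
      also have "\<dots> = of_nat (j choose i) * rep (exH j) (E1 i * E2 i + F1 i * F2 i * wp) (E1 i * F2 i + E2 i * F1 i) z"
        using A by (subst rep_mult) (simp_all add: e)
      also have "\<dots> = rep (exH j) (smult (of_nat (j choose i)) (E1 i * E2 i + F1 i * F2 i * wp))
                 (smult (of_nat (j choose i)) (E1 i * F2 i + E2 i * F1 i)) z"
        by (rule rep_scale)
      finally show "of_nat (j choose i) * (deriv ^^ i) (F z) 0 * (deriv ^^ (j-i)) (G z) 0 =
          rep (exH j) (smult (of_nat (j choose i)) (E1 i * E2 i + F1 i * F2 i * wp))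
                 (smult (of_nat (j choose i)) (E1 i * F2 i + E2 i * F1 i)) z" .
    qed
    also have "\<dots> = rep (exH j) (\<Sum>i\<in>{0..j}. smult (of_nat (j choose i)) (E1 i * E2 i + F1 i * F2 i * wp))
                 (\<Sum>i\<in>{0..j}. smult (of_nat (j choose i)) (E1 i * F2 i + E2 i * F1 i)) z"
      by (rule rep_sum)
    finally show "(deriv^^j) (\<lambda>y. F z y * G z y) 0 =
     rep (exH j) (\<Sum>i\<in>{0..j}. smult (of_nat (j choose i)) (E1 i * E2 i + F1 i * F2 i * wp))
                 (\<Sum>i\<in>{0..j}. smult (of_nat (j choose i)) (E1 i * F2 i + E2 i * F1 i)) z" .
  qed
  then have R: "\<forall>\<^sub>F z in nhds 0. (deriv^^j) (\<lambda>y. F z y * G z y) 0 = rep (exH j) EE FF z"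
    unfolding EE_def FF_def .
  show "\<exists>e f. \<forall>\<^sub>F z in nhds 0. (deriv^^j) (\<lambda>y. F z y * G z y) 0 = rep (exH j) e f z"
    apply (rule exI[of _ EE]) apply (rule exI[of _ FF]) by (rule R)
qed

lemma map_poly_pderiv_ev:
  fixes P :: "complex poly poly"
  shows "map_poly (\<lambda>q. poly q z) (pderiv P) = pderiv (map_poly (\<lambda>q. poly q z) P)"
  by (rule poly_eqI) (simp add: coeff_pderiv coeff_map_poly)

lemma eval2_deriv: "((\<lambda>y. eval2 P z y) has_field_derivative eval2 (pderiv P) z y) (at y)"
  by (simp add: eval2_def map_poly_pderiv_ev)

lemma higher_deriv_eval2:
  "(deriv ^^ j) (\<lambda>y. eval2 P z y) = (\<lambda>y. eval2 ((pderiv ^^ j) P) z y)"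
proof (induction j)
  case 0 then show ?case by simp
next
  case (Suc j)
  show ?case
    apply (rule ext)
    apply (simp add: Suc)
    apply (rule DERIV_imp_deriv)
    apply (rule eval2_deriv)
    done
qed

lemma eval2_0: "eval2 P z 0 = poly (coeff P 0) z"
  by (simp add: eval2_def poly_0_coeff_0 coeff_map_poly)

lemma eval2_pCons: "eval2 (pCons c P) z y = poly c z + y * eval2 P z y"
  by (simp add: eval2_def map_poly_pCons)

lemma eval2_zero: "eval2 0 z y = 0"
  by (simp add: eval2_def)

lemma eval2_analytic: "(\<lambda>y. eval2 P z y) analytic_on S"
proof -
  have "(\<lambda>y. eval2 P z y) holomorphic_on UNIV"
    by (subst holomorphic_on_open) (use eval2_deriv in auto)
  then have "(\<lambda>y. eval2 P z y) analytic_on UNIV" by (simp add: analytic_on_open)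
  then show ?thesis by (rule analytic_on_subset) auto
qed

lemma good_poly: "good N ex (\<lambda>z y. eval2 P z y)"
  unfolding good_def
proof (intro conjI allI impI)
  show "\<forall>\<^sub>F z in nhds 0. (\<lambda>y. eval2 P z y) analytic_on {0}" by (simp add: eval2_analytic)
  fix j
  have R: "\<forall>\<^sub>F z in nhds 0. (deriv ^^ j) (\<lambda>y. eval2 P z y) 0 = rep 0 (coeff ((pderiv ^^ j) P) 0) 0 z"
    by (simp add: higher_deriv_eval2 eval2_0 rep_def)
  show "\<exists>e f. \<forall>\<^sub>F z in nhds 0. (deriv ^^ j) (\<lambda>y. eval2 P z y) 0 = rep (ex j) e f z"
    using ev_rep_mono[OF R, of "ex j"] by simp
qed

lemma good_add:
  assumes F: "good N ex F" and G: "good N ex G"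
  shows "good N ex (\<lambda>z y. F z y + G z y)"
  unfolding good_def
proof (intro conjI allI impI)
  show "\<forall>\<^sub>F z in nhds 0. (\<lambda>y. F z y + G z y) analytic_on {0}"
    using eventually_conj[OF F[unfolded good_def, THEN conjunct1] G[unfolded good_def, THEN conjunct1]]
    by (rule eventually_mono) (auto intro: analytic_on_add)
  fix j assume j: "j \<le> N"
  obtain e1 f1 where 1: "\<forall>\<^sub>F z in nhds 0. (deriv^^j) (F z) 0 = rep (ex j) e1 f1 z"
    using F j unfolding good_def by blast
  obtain e2 f2 where 2: "\<forall>\<^sub>F z in nhds 0. (deriv^^j) (G z) 0 = rep (ex j) e2 f2 z"
    using G j unfolding good_def by blast
  have "\<forall>\<^sub>F z in nhds 0. (deriv^^j) (\<lambda>y. F z y + G z y) 0 = rep (ex j) (e1+e2) (f1+f2) z"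
    using eventually_conj[OF eventually_conj[OF 1 2] eventually_conj[OF F[unfolded good_def, THEN conjunct1] G[unfolded good_def, THEN conjunct1]]]
    by (rule eventually_mono) (simp add: higher_deriv_add_at rep_add)
  then show "\<exists>e f. \<forall>\<^sub>F z in nhds 0. (deriv^^j) (\<lambda>y. F z y + G z y) 0 = rep (ex j) e f z"
    by blast
qed

lemma good_cmult:
  assumes F: "good N ex F"
  shows "good N ex (\<lambda>z y. c * F z y)"
  unfolding good_def
proof (intro conjI allI impI)
  show "\<forall>\<^sub>F z in nhds 0. (\<lambda>y. c * F z y) analytic_on {0}"
    using F[unfolded good_def, THEN conjunct1]
    by (rule eventually_mono) (auto intro: analytic_on_mult)
  fix j assume j: "j \<le> N"
  obtain e1 f1 where 1: "\<forall>\<^sub>F z in nhds 0. (deriv^^j) (F z) 0 = rep (ex j) e1 f1 z"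
    using F j unfolding good_def by blast
  have "\<forall>\<^sub>F z in nhds 0. (deriv^^j) (\<lambda>y. c * F z y) 0 = rep (ex j) (smult c e1) (smult c f1) z"
    using eventually_conj[OF 1 F[unfolded good_def, THEN conjunct1]]
    by (rule eventually_mono) (simp add: higher_deriv_cmult' rep_scale)
  then show "\<exists>e f. \<forall>\<^sub>F z in nhds 0. (deriv^^j) (\<lambda>y. c * F z y) 0 = rep (ex j) e f z"
    by blast
qed

lemma good_cong:
  assumes F: "good N ex F" and E: "\<forall>\<^sub>F z in nhds 0. \<forall>\<^sub>F y in nhds 0. F z y = G z y"
  shows "good N ex G"
  unfolding good_def
proof (intro conjI allI impI)
  show "\<forall>\<^sub>F z in nhds 0. G z analytic_on {0}"
    using eventually_conj[OF F[unfolded good_def, THEN conjunct1] E]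
    by (rule eventually_mono) (use analytic_at_cong in blast)
  fix j assume j: "j \<le> N"
  obtain e1 f1 where 1: "\<forall>\<^sub>F z in nhds 0. (deriv^^j) (F z) 0 = rep (ex j) e1 f1 z"
    using F j unfolding good_def by blast
  have "\<forall>\<^sub>F z in nhds 0. (deriv^^j) (G z) 0 = rep (ex j) e1 f1 z"
    using eventually_conj[OF 1 E]
    by (rule eventually_mono) (metis higher_deriv_cong_ev)
  then show "\<exists>e f. \<forall>\<^sub>F z in nhds 0. (deriv^^j) (G z) 0 = rep (ex j) e f z"
    by blast
qed

lemma good_shift:
  assumes D: "\<forall>\<^sub>F z in nhds 0. \<exists>r>0. \<forall>y\<in>ball 0 r. (F z has_field_derivative F' z y) (at y)"
    and G: "good N ex' F'" and B: "\<exists>e f. \<forall>\<^sub>F z in nhds 0. F z 0 = rep (ex 0) e f z"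
    and ex: "\<And>j. j \<le> N \<Longrightarrow> ex' j \<le> ex (Suc j)"
  shows "good (Suc N) ex F"
  unfolding good_def
proof (intro conjI allI impI)
  have D2: "\<forall>\<^sub>F z in nhds 0. F z analytic_on {0} \<and> (\<forall>\<^sub>F y in nhds 0. deriv (F z) y = F' z y)"
    using D
  proof (rule eventually_mono)
    fix z assume "\<exists>r>0. \<forall>y\<in>ball 0 r. (F z has_field_derivative F' z y) (at y)"
    then obtain r where r: "r > 0" "\<forall>y\<in>ball 0 r. (F z has_field_derivative F' z y) (at y)" by blast
    have "F z holomorphic_on ball 0 r"
      using r by (subst holomorphic_on_open) auto
    then have "F z analytic_on {0}"
      using r by (intro holomorphic_on_imp_analytic_at[of _ "ball 0 r"]) auto
    moreover have "\<forall>\<^sub>F y in nhds 0. deriv (F z) y = F' z y"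
      using eventually_nhds_ball[OF r(1), of "0::complex"]
      by (rule eventually_mono) (use r(2) DERIV_imp_deriv in blast)
    ultimately show "F z analytic_on {0} \<and> (\<forall>\<^sub>F y in nhds 0. deriv (F z) y = F' z y)" by blast
  qed
  then show "\<forall>\<^sub>F z in nhds 0. F z analytic_on {0}"
    by (rule eventually_mono) blast
  fix j assume j: "j \<le> Suc N"
  show "\<exists>e f. \<forall>\<^sub>F z in nhds 0. (deriv^^j) (F z) 0 = rep (ex j) e f z"
  proof (cases j)
    case 0 then show ?thesis using B by simp
  next
    case (Suc k)
    then have k: "k \<le> N" using j by auto
    obtain e1 f1 where 1: "\<forall>\<^sub>F z in nhds 0. (deriv^^k) (F' z) 0 = rep (ex' k) e1 f1 z"
      using G k unfolding good_def by blast
    have R: "\<forall>\<^sub>F z in nhds 0. (deriv^^j) (F z) 0 = rep (ex' k) e1 f1 z"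
      using eventually_conj[OF 1 D2]
    proof (rule eventually_mono)
      fix z assume A: "(deriv^^k) (F' z) 0 = rep (ex' k) e1 f1 z \<and> F z analytic_on {0} \<and> (\<forall>\<^sub>F y in nhds 0. deriv (F z) y = F' z y)"
      have "(deriv^^j) (F z) 0 = (deriv^^k) (deriv (F z)) 0"
        unfolding Suc funpow_Suc_right by simp
      also have "\<dots> = (deriv^^k) (F' z) 0"
        using A by (intro higher_deriv_cong_ev) auto
      finally show "(deriv^^j) (F z) 0 = rep (ex' k) e1 f1 z" using A by simp
    qed
    from ev_rep_mono[OF R ex[OF k]] show ?thesis using Suc by simp
  qed
qed

lemma D_analytic:
  assumes D: "\<forall>\<^sub>F z in nhds 0. \<exists>r>0. \<forall>y\<in>ball 0 r. (F z has_field_derivative F' z y) (at y)"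
  shows "\<forall>\<^sub>F z in nhds 0. F z analytic_on {0}"
  using D
proof (rule eventually_mono)
  fix z assume "\<exists>r>0. \<forall>y\<in>ball 0 r. (F z has_field_derivative F' z y) (at y)"
  then obtain r where r: "r > 0" "\<forall>y\<in>ball 0 r. (F z has_field_derivative F' z y) (at y)" by blast
  have "F z holomorphic_on ball 0 r"
    using r by (subst holomorphic_on_open) auto
  then show "F z analytic_on {0}"
    using r by (intro holomorphic_on_imp_analytic_at[of _ "ball 0 r"]) auto
qed

lemma good_zero:
  assumes D: "\<forall>\<^sub>F z in nhds 0. \<exists>r>0. \<forall>y\<in>ball 0 r. (F z has_field_derivative F' z y) (at y)"
    and B: "\<exists>e f. \<forall>\<^sub>F z in nhds 0. F z 0 = rep (ex 0) e f z"
  shows "good 0 ex F"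
  unfolding good_def using D_analytic[OF D] B by auto

lemma good_zpoly: "good N ex (\<lambda>z y. poly p z)"
proof -
  have eq: "(\<lambda>z y. eval2 [:p:] z y) = (\<lambda>z y. poly p z)"
    by (intro ext) (simp add: eval2_pCons eval2_zero)
  show ?thesis using good_poly[of N ex "[:p:]"] unfolding eq .
qed

lemma good_zmult:
  assumes "good N ex F" "\<And>i j. i \<le> j \<Longrightarrow> ex i \<le> ex j"
  shows "good N ex (\<lambda>z y. poly p z * F z y)"
  by (rule good_mult[OF good_zpoly[of N "\<lambda>_. 0"] assms(1)]) (simp add: assms(2))

lemma good_pmult:
  assumes "good N ex F" "\<And>i j. i \<le> j \<Longrightarrow> ex i \<le> ex j"
  shows "good N ex (\<lambda>z y. eval2 P z y * F z y)"
  by (rule good_mult[OF good_poly[of N "\<lambda>_. 0"] assms(1)]) (simp add: assms(2))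

lemma pz: fixes z :: complex shows "poly [:0,0,0,-2:] z = -2*z^3" "poly [:0,0,0,2:] z = 2*z^3" "poly [:0,-2:] z = -2*z"
  by (simp_all add: power3_eq_cube)

definition Qf :: "complex \<Rightarrow> complex \<Rightarrow> complex" where "Qf z y = 1 - 2*z^2 - 4*y*z^3"
definition S :: "complex \<Rightarrow> complex \<Rightarrow> complex" where "S z y = csqrt (Qf z y)"
definition Rr :: "complex \<Rightarrow> complex \<Rightarrow> complex" where "Rr z y = 1 / S z y"
definition W :: "complex \<Rightarrow> complex \<Rightarrow> complex" where "W z y = 1 / (1 + 2*y*z)"

lemma Qf_re:
  assumes z: "norm z < 1/4" and y: "norm y < 1"
  shows "Re (Qf z y) > 0"
proof -
  have a0: "norm z ^ 2 \<le> (1/4)^2" using z by (intro power_mono) auto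
  have a: "norm z ^ 2 \<le> 1/16" by (rule order_trans[OF a0]) (simp add: power_divide)
  have b0: "norm z ^ 3 \<le> (1/4)^3" using z by (intro power_mono) auto
  have b: "norm z ^ 3 \<le> 1/64" by (rule order_trans[OF b0]) (simp add: power_divide)
  have c: "norm y * norm z ^ 3 \<le> 1 * (1/64)" using b y by (intro mult_mono) auto
  have "norm (2*z^2 + 4*y*z^3) \<le> norm (2*z^2) + norm (4*y*z^3)" by (rule norm_triangle_ineq)
  also have "\<dots> = 2 * norm z ^ 2 + 4 * (norm y * norm z ^ 3)" by (simp add: norm_mult norm_power)
  also have "\<dots> < 1" using a c by linarith
  finally have n: "norm (2*z^2 + 4*y*z^3) < 1" .
  have "Re (2*z^2 + 4*y*z^3) \<le> norm (2*z^2 + 4*y*z^3)" by (rule complex_Re_le_cmod)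
  then have "Re (2*z^2 + 4*y*z^3) < 1" using n by linarith
  then show ?thesis by (simp add: Qf_def)
qed

lemma Qf_nonpos:
  assumes "norm z < 1/4" "norm y < 1"
  shows "Qf z y \<notin> \<real>\<^sub>\<le>\<^sub>0" "S z y \<noteq> 0"
  using Qf_re[OF assms] by (auto simp: complex_nonpos_Reals_iff S_def)

lemma Qf_deriv: "((\<lambda>y. Qf z y) has_field_derivative (-4*z^3)) (at y)"
  unfolding Qf_def by (auto intro!: derivative_eq_intros)

lemma S_deriv:
  assumes "norm z < 1/4" "norm y < 1"
  shows "(S z has_field_derivative poly [:0,0,0,-2:] z * Rr z y) (at y)"
proof -
  have "((\<lambda>y. csqrt (Qf z y)) has_field_derivative (-4*z^3) / (2 * csqrt (Qf z y))) (at y)"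
    by (rule has_field_derivative_csqrt'[OF Qf_deriv Qf_nonpos(1)[OF assms]])
  then show ?thesis
    unfolding S_def[abs_def] pz by (rule DERIV_cong) (simp add: Rr_def S_def field_simps)
qed

lemma Rr_deriv:
  assumes "norm z < 1/4" "norm y < 1"
  shows "(Rr z has_field_derivative poly [:0,0,0,2:] z * (Rr z y * Rr z y * Rr z y)) (at y)"
proof -
  have "((\<lambda>y. 1 / S z y) has_field_derivative (0 * S z y - 1 * (poly [:0,0,0,-2:] z * Rr z y)) / (S z y * S z y)) (at y)"
    by (rule DERIV_divide[OF DERIV_const[of 1 "at y"] S_deriv[OF assms] Qf_nonpos(2)[OF assms]])
  then show ?thesis
    unfolding Rr_def[abs_def] pz by (rule DERIV_cong) (simp add: Rr_def field_simps)
qed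

lemma W_ne:
  fixes y z :: complex
  assumes "norm z < 1/4" "norm y < 1"
  shows "1 + 2*y*z \<noteq> 0"
proof
  assume "1 + 2*y*z = 0"
  then have "2*y*z = -1" by (simp add: add_eq_0_iff)
  then have "norm (2*y*z) = 1" by simp
  moreover have "norm (2*y*z) < 1"
  proof -
    have "norm y * norm z \<le> 1 * (1/4)" using assms by (intro mult_mono) auto
    then show ?thesis by (simp add: norm_mult)
  qed
  ultimately show False by simp
qed

lemma W_deriv:
  assumes "norm z < 1/4" "norm y < 1"
  shows "(W z has_field_derivative poly [:0,-2:] z * (W z y * W z y)) (at y)"
proof -
  have d: "((\<lambda>y. 1 + 2*y*z) has_field_derivative 2*z) (at y)"
    by (auto intro!: derivative_eq_intros)
  have "((\<lambda>y. 1 / (1 + 2*y*z)) has_field_derivative (0 * (1 + 2*y*z) - 1 * (2*z)) / ((1 + 2*y*z) * (1 + 2*y*z))) (at y)"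
    by (rule DERIV_divide[OF DERIV_const[of 1 "at y"] d W_ne[OF assms]])
  then show ?thesis
    unfolding W_def[abs_def] pz by (rule DERIV_cong) (simp add: W_def field_simps)
qed

lemma ev_region:
  "\<forall>\<^sub>F z in nhds (0::complex). norm z < 1/4 \<and> sq z \<noteq> 0"
proof -
  have "\<forall>\<^sub>F z in nhds (0::complex). norm z < 1/4" by (rule ev_small) simp
  then show ?thesis using eventually_conj[OF _ ev_sq_nz] by blast
qed

lemma ev_D:
  fixes F F' :: "complex \<Rightarrow> complex \<Rightarrow> complex"
  assumes "\<And>z y. norm z < 1/4 \<Longrightarrow> norm y < 1 \<Longrightarrow> (F z has_field_derivative F' z y) (at y)"
  shows "\<forall>\<^sub>F z in nhds 0. \<exists>r>0. \<forall>y\<in>ball 0 r. (F z has_field_derivative F' z y) (at y)"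
  using ev_region
  by (rule eventually_mono) (rule exI[of _ 1], use assms in auto)

lemma S0: "S z 0 = sq z" by (simp add: S_def Qf_def sq_def)

lemma good_Rr: "good N (\<lambda>j. 2*j+1) Rr"
proof (induction N)
  case 0
  show ?case
  proof (rule good_zero[OF ev_D[of Rr "\<lambda>z y. poly [:0,0,0,2:] z * (Rr z y * Rr z y * Rr z y)", OF Rr_deriv]])
    show "\<exists>e f. \<forall>\<^sub>F z in nhds 0. Rr z 0 = rep (2*0+1) e f z"
      by (rule exI[of _ 1], rule exI[of _ 0]) (simp add: Rr_def rep_def S0)
  qed
next
  case (Suc N)
  have "good N (\<lambda>j. 2*j+2) (\<lambda>z y. Rr z y * Rr z y)"
    by (rule good_mult[OF Suc Suc]) auto
  then have "good N (\<lambda>j. 2*j+3) (\<lambda>z y. Rr z y * Rr z y * Rr z y)"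
    by (rule good_mult[OF _ Suc]) auto
  then have G: "good N (\<lambda>j. 2*j+3) (\<lambda>z y. poly [:0,0,0,2:] z * (Rr z y * Rr z y * Rr z y))"
    by (rule good_zmult) auto
  have D: "\<forall>\<^sub>F z in nhds 0. \<exists>r>0. \<forall>y\<in>ball 0 r. (Rr z has_field_derivative poly [:0,0,0,2:] z * (Rr z y * Rr z y * Rr z y)) (at y)"
    by (rule ev_D) (rule Rr_deriv)
  have B: "\<exists>e f. \<forall>\<^sub>F z in nhds 0. Rr z 0 = rep ((\<lambda>j. 2*j+1) 0) e f z"
    by (rule exI[of _ 1], rule exI[of _ 0]) (simp add: Rr_def rep_def S0)
  show ?case
    by (rule good_shift[where ex="\<lambda>j. 2*j+1", OF D G B]) auto
qed

lemma good_S: "good N (\<lambda>j. 2*j-1) S"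
proof (cases N)
  case 0
  show ?thesis unfolding 0
  proof (rule good_zero[OF ev_D[of S "\<lambda>z y. poly [:0,0,0,-2:] z * Rr z y", OF S_deriv]])
    show "\<exists>e f. \<forall>\<^sub>F z in nhds 0. S z 0 = rep (2*0-1) e f z"
      by (rule exI[of _ 0], rule exI[of _ 1]) (simp add: rep_def S0)
  qed
next
  case (Suc M)
  have "good M (\<lambda>j. 2*j+1) (\<lambda>z y. poly [:0,0,0,-2:] z * Rr z y)"
    by (rule good_zmult[OF good_Rr]) auto
  note G = this
  have D: "\<forall>\<^sub>F z in nhds 0. \<exists>r>0. \<forall>y\<in>ball 0 r. (S z has_field_derivative poly [:0,0,0,-2:] z * Rr z y) (at y)"
    by (rule ev_D) (rule S_deriv)
  have B: "\<exists>e f. \<forall>\<^sub>F z in nhds 0. S z 0 = rep ((\<lambda>j. 2*j-1) 0) e f z"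
    by (rule exI[of _ 0], rule exI[of _ 1]) (simp add: rep_def S0)
  show ?thesis unfolding Suc
    by (rule good_shift[where ex="\<lambda>j. 2*j-1", OF D G B]) auto
qed

lemma good_W: "good N (\<lambda>j. 2*j-1) W"
proof (induction N)
  case 0
  show ?case
  proof (rule good_zero[OF ev_D[of W "\<lambda>z y. poly [:0,-2:] z * (W z y * W z y)", OF W_deriv]])
    show "\<exists>e f. \<forall>\<^sub>F z in nhds 0. W z 0 = rep (2*0-1) e f z"
      by (rule exI[of _ 1], rule exI[of _ 0]) (simp add: W_def rep_def)
  qed
next
  case (Suc N)
  have "good N (\<lambda>j. 2*j-1) (\<lambda>z y. W z y * W z y)"
    by (rule good_mult[OF Suc Suc]) auto
  then have G: "good N (\<lambda>j. 2*j-1) (\<lambda>z y. poly [:0,-2:] z * (W z y * W z y))"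
    by (rule good_zmult) auto
  have D: "\<forall>\<^sub>F z in nhds 0. \<exists>r>0. \<forall>y\<in>ball 0 r. (W z has_field_derivative poly [:0,-2:] z * (W z y * W z y)) (at y)"
    by (rule ev_D) (rule W_deriv)
  have B: "\<exists>e f. \<forall>\<^sub>F z in nhds 0. W z 0 = rep ((\<lambda>j. 2*j-1) 0) e f z"
    by (rule exI[of _ 1], rule exI[of _ 0]) (simp add: W_def rep_def)
  show ?case
    by (rule good_shift[where ex="\<lambda>j. 2*j-1", OF D G B]) auto
qed

lemma powr_half_minus:
  assumes "w \<noteq> 0" "l \<ge> 1"
  shows "w powr (of_nat l - 1/2) = csqrt w ^ (2*l-1)"
proof -
  have e: "of_nat (2*l-1) * (ln w / 2) = (of_nat l - 1/2) * ln w"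
    using assms(2) by (simp add: of_nat_diff field_simps)
  have "csqrt w ^ (2*l-1) = exp (ln w / 2) ^ (2*l-1)"
    using assms(1) by (simp add: csqrt_exp_Ln)
  also have "\<dots> = exp (of_nat (2*l-1) * (ln w / 2))" by (rule exp_of_nat_mult[symmetric])
  also have "\<dots> = w powr (of_nat l - 1/2)" using assms(1) by (simp only: powr_def e) simp
  finally show ?thesis by simp
qed

lemma powr_half_plus:
  assumes "w \<noteq> 0"
  shows "w powr (of_nat l + 1/2) = csqrt w ^ (2*l+1)"
proof -
  have e: "of_nat (2*l+1) * (ln w / 2) = (of_nat l + 1/2) * ln w"
    by (simp add: field_simps)
  have "csqrt w ^ (2*l+1) = exp (ln w / 2) ^ (2*l+1)"
    using assms(1) by (simp add: csqrt_exp_Ln)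
  also have "\<dots> = exp (of_nat (2*l+1) * (ln w / 2))" by (rule exp_of_nat_mult[symmetric])
  also have "\<dots> = w powr (of_nat l + 1/2)" using assms(1) by (simp only: powr_def e) simp
  finally show ?thesis by simp
qed

lemma good_GG: "good N (\<lambda>j. 2*j-1) (\<lambda>z y. GG a b z y)"
proof -
  have m: "\<And>i j. i \<le> (j::nat) \<Longrightarrow> 2*i-1 \<le> 2*j-1" by auto
  have 1: "good N (\<lambda>j. 2*j-1) (\<lambda>z y. eval2 a z y * W z y)"
    by (rule good_pmult[OF good_W m])
  have "good N (\<lambda>j. 2*j-1) (\<lambda>z y. S z y * W z y)"
    by (rule good_mult[OF good_S good_W]) auto
  then have "good N (\<lambda>j. 2*j-1) (\<lambda>z y. eval2 b z y * (S z y * W z y))"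
    by (rule good_pmult[OF _ m])
  then have "good N (\<lambda>j. 2*j-1) (\<lambda>z y. (-1) * (eval2 b z y * (S z y * W z y)))"
    by (rule good_cmult)
  then have "good N (\<lambda>j. 2*j-1) (\<lambda>z y. eval2 a z y * W z y + (-1) * (eval2 b z y * (S z y * W z y)))"
    by (rule good_add[OF 1])
  moreover have "(\<lambda>z y. eval2 a z y * W z y + (-1) * (eval2 b z y * (S z y * W z y))) = (\<lambda>z y. GG a b z y)"
    by (intro ext) (simp add: GG_def W_def S_def Qf_def divide_inverse algebra_simps)
  ultimately show ?thesis by simp
qed

definition Dp :: "complex poly poly \<Rightarrow> complex poly poly" where "Dp a = [:1, [:0,2:]:] - a"
definition T :: "complex poly poly \<Rightarrow> complex poly poly \<Rightarrow> complex \<Rightarrow> complex \<Rightarrow> complex" where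
  "T a b z y = eval2 (Dp a) z y + eval2 b z y * S z y"
definition Tp :: "complex poly poly \<Rightarrow> complex poly poly \<Rightarrow> complex \<Rightarrow> complex \<Rightarrow> complex" where
  "Tp a b z y = eval2 (pderiv (Dp a)) z y + (eval2 (pderiv b) z y * S z y + eval2 b z y * (poly [:0,0,0,-2:] z * Rr z y))"
definition gg :: "complex poly poly \<Rightarrow> complex poly poly \<Rightarrow> complex \<Rightarrow> complex \<Rightarrow> complex" where
  "gg a b z y = 1 / T a b z y"

lemma eval2_diff: "eval2 (p - q) z y = eval2 p z y - eval2 q z y"
proof -
  have "map_poly (\<lambda>q. poly q z) (p - q) = map_poly (\<lambda>q. poly q z) p - map_poly (\<lambda>q. poly q z) q"
    by (rule poly_eqI) (simp add: coeff_map_poly)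
  then show ?thesis by (simp add: eval2_def)
qed

lemma eval2_u: "eval2 [:1, [:0,2:]:] z y = 1 + 2*y*z"
  by (simp add: eval2_pCons eval2_zero algebra_simps)

lemma T_deriv:
  assumes "norm z < 1/4" "norm y < 1"
  shows "(T a b z has_field_derivative Tp a b z y) (at y)"
proof -
  have "((\<lambda>y. eval2 (Dp a) z y + eval2 b z y * S z y) has_field_derivative
     eval2 (pderiv (Dp a)) z y + (eval2 (pderiv b) z y * S z y + (poly [:0,0,0,-2:] z * Rr z y) * eval2 b z y)) (at y)"
    by (rule DERIV_add[OF eval2_deriv DERIV_mult[OF eval2_deriv S_deriv[OF assms]]])
  then show ?thesis
    unfolding T_def[abs_def] by (rule DERIV_cong) (simp add: Tp_def mult_ac)
qed

lemma good_Tp: "good N (\<lambda>j. 2*j+1) (Tp a b)"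
proof -
  have 1: "good N (\<lambda>j. 2*j+1) (\<lambda>z y. eval2 (pderiv b) z y * S z y)"
    by (rule good_mult[OF good_poly[of N "\<lambda>_. 0"] good_S]) auto
  have "good N (\<lambda>j. 2*j+1) (\<lambda>z y. poly [:0,0,0,-2:] z * Rr z y)"
    by (rule good_zmult[OF good_Rr]) auto
  then have 2: "good N (\<lambda>j. 2*j+1) (\<lambda>z y. eval2 b z y * (poly [:0,0,0,-2:] z * Rr z y))"
    by (rule good_pmult) auto
  have "good N (\<lambda>j. 2*j+1) (\<lambda>z y. eval2 (pderiv (Dp a)) z y + (eval2 (pderiv b) z y * S z y + eval2 b z y * (poly [:0,0,0,-2:] z * Rr z y)))"
    by (rule good_add[OF good_poly good_add[OF 1 2]])
  then show ?thesis unfolding Tp_def[abs_def] .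
qed

lemma T0:
  assumes "\<And>z. eval2 a z 0 = 1" and "\<And>z. eval2 b z 0 = 1"
  shows "T a b z 0 = sq z"
  using assms by (simp add: T_def Dp_def eval2_diff eval2_u S0)

lemma gg_D:
  assumes "\<And>z. eval2 a z 0 = 1" and "\<And>z. eval2 b z 0 = 1"
  shows "\<forall>\<^sub>F z in nhds 0. \<exists>r>0. \<forall>y\<in>ball 0 r. (gg a b z has_field_derivative (-1) * (Tp a b z y * (gg a b z y * gg a b z y))) (at y)"
  using ev_region
proof (rule eventually_mono)
  fix z :: complex assume z: "norm z < 1/4 \<and> sq z \<noteq> 0"
  have "isCont (T a b z) 0" using T_deriv[of z 0] z by (intro DERIV_isCont) auto
  moreover have "T a b z 0 \<noteq> 0" using T0[OF assms] z by simp
  ultimately obtain e where e: "e > 0" "\<forall>y. dist 0 y < e \<longrightarrow> T a b z y \<noteq> 0"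
    using continuous_at_avoid by blast
  show "\<exists>r>0. \<forall>y\<in>ball 0 r. (gg a b z has_field_derivative (-1) * (Tp a b z y * (gg a b z y * gg a b z y))) (at y)"
  proof (intro exI[of _ "min e 1"] conjI ballI)
    show "min e 1 > 0" using e by simp
    fix y :: complex assume y: "y \<in> ball 0 (min e 1)"
    then have y1: "norm y < 1" and ne: "T a b z y \<noteq> 0" using e by (auto simp: dist_0_norm)
    have "((\<lambda>y. 1 / T a b z y) has_field_derivative (0 * T a b z y - 1 * Tp a b z y) / (T a b z y * T a b z y)) (at y)"
      by (rule DERIV_divide[OF DERIV_const[of 1 "at y"] T_deriv ne]) (use z y1 in auto)
    then show "(gg a b z has_field_derivative (-1) * (Tp a b z y * (gg a b z y * gg a b z y))) (at y)"
      unfolding gg_def[abs_def] by (rule DERIV_cong) (simp add: gg_def field_simps)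
  qed
qed

lemma good_gg:
  assumes "\<And>z. eval2 a z 0 = 1" and "\<And>z. eval2 b z 0 = 1"
  shows "good N (\<lambda>j. 2*j+1) (gg a b)"
proof (induction N)
  case 0
  show ?case
  proof (rule good_zero[OF gg_D[OF assms]])
    show "\<exists>e f. \<forall>\<^sub>F z in nhds 0. gg a b z 0 = rep (2*0+1) e f z"
      by (rule exI[of _ 1], rule exI[of _ 0]) (simp add: gg_def rep_def T0[OF assms])
  qed
next
  case (Suc N)
  have "good N (\<lambda>j. 2*j+2) (\<lambda>z y. gg a b z y * gg a b z y)"
    by (rule good_mult[OF Suc Suc]) auto
  then have "good N (\<lambda>j. 2*j+3) (\<lambda>z y. Tp a b z y * (gg a b z y * gg a b z y))"
    by (rule good_mult[OF good_Tp]) auto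
  then have "good N (\<lambda>j. 2*j+3) (\<lambda>z y. (-1) * (Tp a b z y * (gg a b z y * gg a b z y)))"
    by (rule good_cmult)
  then show ?case
  proof (rule good_shift[OF gg_D[OF assms]])
    show "\<exists>e f. \<forall>\<^sub>F z in nhds 0. gg a b z 0 = rep (2*0+1) e f z"
      by (rule exI[of _ 1], rule exI[of _ 0]) (simp add: gg_def rep_def T0[OF assms])
  qed auto
qed

lemma good_H:
  assumes "\<And>z. eval2 a z 0 = 1" and "\<And>z. eval2 b z 0 = 1"
  shows "good N (\<lambda>j. 2*j+1) (\<lambda>z y. 1 / (1 - GG a b z y))"
proof (rule good_cong)
  show "good N (\<lambda>j. 2*j+1) (\<lambda>z y. eval2 [:1, [:0,2:]:] z y * gg a b z y)"
    by (rule good_pmult[OF good_gg[OF assms]]) auto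
  show "\<forall>\<^sub>F z in nhds 0. \<forall>\<^sub>F y in nhds 0. eval2 [:1, [:0,2:]:] z y * gg a b z y = 1 / (1 - GG a b z y)"
    using ev_small[of "1/4"]
  proof (rule eventually_mono)
    fix z :: complex assume z: "norm z < 1/4"
    show "\<forall>\<^sub>F y in nhds 0. eval2 [:1, [:0,2:]:] z y * gg a b z y = 1 / (1 - GG a b z y)"
      using ev_small[of 1]
    proof (rule eventually_mono)
      fix y :: complex assume y: "norm y < 1"
      have u: "1 + 2*y*z \<noteq> 0" by (rule W_ne[OF z y])
      have "1 - GG a b z y = T a b z y / (1 + 2*y*z)"
        using u by (simp add: GG_def T_def Dp_def eval2_diff eval2_u S_def Qf_def field_simps)
      then show "eval2 [:1, [:0,2:]:] z y * gg a b z y = 1 / (1 - GG a b z y)"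
        by (simp add: eval2_u gg_def)
    qed simp
  qed simp
qed

theorem lemma1:
  fixes a b :: "complex poly poly"
  assumes "\<And>z. eval2 a z 0 = 1" and "\<And>z. eval2 b z 0 = 1"
  shows "(\<forall>l::nat. l \<ge> 1 \<longrightarrow> (\<exists>c d :: complex poly. \<forall>\<^sub>F z in nhds 0.
            (deriv ^^ l) (\<lambda>y. GG a b z y) 0 =
            (poly c z - poly d z * csqrt (1 - 2*z^2)) / ((1 - 2*z^2) powr (of_nat l - 1/2))))
       \<and> (\<forall>l::nat. \<exists>e f :: complex poly. \<forall>\<^sub>F z in nhds 0.
            (deriv ^^ l) (\<lambda>y. 1 / (1 - GG a b z y)) 0 =
            (poly e z - poly f z * csqrt (1 - 2*z^2)) / ((1 - 2*z^2) powr (of_nat l + 1/2)))"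
proof (intro conjI allI impI)
  fix l :: nat assume l: "l \<ge> 1"
  obtain e f where ef: "\<forall>\<^sub>F z in nhds 0. (deriv ^^ l) (\<lambda>y. GG a b z y) 0 = rep (2*l-1) e f z"
    using good_GG[of l a b] unfolding good_def by blast
  have "\<forall>\<^sub>F z in nhds 0. (deriv ^^ l) (\<lambda>y. GG a b z y) 0 =
            (poly e z - poly (-f) z * csqrt (1 - 2*z^2)) / ((1 - 2*z^2) powr (of_nat l - 1/2))"
    using eventually_conj[OF ef ev_sq_nz]
  proof (rule eventually_mono)
    fix z :: complex assume A: "(deriv ^^ l) (\<lambda>y. GG a b z y) 0 = rep (2*l-1) e f z \<and> sq z \<noteq> 0"
    then have w: "1 - 2*z^2 \<noteq> 0" by (auto simp: sq_def)
    show "(deriv ^^ l) (\<lambda>y. GG a b z y) 0 =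
            (poly e z - poly (-f) z * csqrt (1 - 2*z^2)) / ((1 - 2*z^2) powr (of_nat l - 1/2))"
      using A by (simp add: powr_half_minus[OF w l] rep_def sq_def)
  qed
  then show "\<exists>c d :: complex poly. \<forall>\<^sub>F z in nhds 0.
            (deriv ^^ l) (\<lambda>y. GG a b z y) 0 =
            (poly c z - poly d z * csqrt (1 - 2*z^2)) / ((1 - 2*z^2) powr (of_nat l - 1/2))"
    by blast
next
  fix l :: nat
  obtain e f where ef: "\<forall>\<^sub>F z in nhds 0. (deriv ^^ l) (\<lambda>y. 1 / (1 - GG a b z y)) 0 = rep (2*l+1) e f z"
    using good_H[OF assms, of l] unfolding good_def by blast
  have "\<forall>\<^sub>F z in nhds 0. (deriv ^^ l) (\<lambda>y. 1 / (1 - GG a b z y)) 0 =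
            (poly e z - poly (-f) z * csqrt (1 - 2*z^2)) / ((1 - 2*z^2) powr (of_nat l + 1/2))"
    using eventually_conj[OF ef ev_sq_nz]
  proof (rule eventually_mono)
    fix z :: complex assume A: "(deriv ^^ l) (\<lambda>y. 1 / (1 - GG a b z y)) 0 = rep (2*l+1) e f z \<and> sq z \<noteq> 0"
    then have w: "1 - 2*z^2 \<noteq> 0" by (auto simp: sq_def)
    show "(deriv ^^ l) (\<lambda>y. 1 / (1 - GG a b z y)) 0 =
            (poly e z - poly (-f) z * csqrt (1 - 2*z^2)) / ((1 - 2*z^2) powr (of_nat l + 1/2))"
      using A by (simp add: powr_half_plus[OF w] rep_def sq_def)
  qed
  then show "\<exists>e f :: complex poly. \<forall>\<^sub>F z in nhds 0.
            (deriv ^^ l) (\<lambda>y. 1 / (1 - GG a b z y)) 0 =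
            (poly e z - poly f z * csqrt (1 - 2*z^2)) / ((1 - 2*z^2) powr (of_nat l + 1/2))"
    by blast
qed

end
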